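(* Let $n\ge 2$. For each measurable function $f:\mathbb{R}\to\mathbb{R}$ and each real number $x$, the following are equivalent: (a) the ordinary derivative $f'(x)=\lim_{h\to0}\frac{f(x+h)-f(x)}{h}$ exists, and for every $k=2,\dots,n$ and every $j=0,1,\dots,k-2$ the limit $$D_{k,j}f(x)=\lim_{h\to0}h^{-k}\sum_{i=0}^k(-1)^i\binom ki f\big(x+(k+j-i)h\big)$$ exists (finite); (b) the Peano derivative $f_{(n)}(x)$ exists. *)

theory Defs
  imports "HOL-Analysis.Analysis"
begin

definition peano_differentiable :: "nat \<Rightarrow> (real \<Rightarrow> real) \<Rightarrow> real \<Rightarrow> bool" where
  "peano_differentiable n f x \<longleftrightarrow>
     (\<exists>a::nat \<Rightarrow> real. a 0 = f x \<and>
        ((\<lambda>h. (f (x + h) - (\<Sum>i\<le>n. a i * h ^ i / fact i)) / h ^ n) \<longlongrightarrow> 0) (at 0))"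

definition diff_quot :: "nat \<Rightarrow> nat \<Rightarrow> (real \<Rightarrow> real) \<Rightarrow> real \<Rightarrow> real \<Rightarrow> real" where
  "diff_quot k j f x h =
     (\<Sum>i\<le>k. (-1) ^ i * real (k choose i) * f (x + (real k + real j - real i) * h)) / h ^ k"

definition D_exists :: "nat \<Rightarrow> nat \<Rightarrow> (real \<Rightarrow> real) \<Rightarrow> real \<Rightarrow> bool" where
  "D_exists k j f x \<longleftrightarrow> (\<exists>L. (diff_quot k j f x \<longlongrightarrow> L) (at 0))"

end

theory Submission
  imports Defs
begin

definition fd :: "nat \<Rightarrow> (nat \<Rightarrow> real) \<Rightarrow> nat \<Rightarrow> real" where
  "fd K v j = (\<Sum>i\<le>K. (-1)^(K-i) * real (K choose i) * v (j+i))"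

lemma pascal_sum:
  "(\<Sum>l\<le>Suc K. real (Suc K choose l) * z l) =
   (\<Sum>l\<le>K. real (K choose l) * z l) + (\<Sum>l\<le>K. real (K choose l) * z (Suc l))"
proof -
  have "(\<Sum>l\<le>Suc K. real (Suc K choose l) * z l) =
      z 0 + (\<Sum>l\<le>K. real (K choose Suc l) * z (Suc l)) + (\<Sum>l\<le>K. real (K choose l) * z (Suc l))"
    by (simp only: sum.atMost_Suc_shift binomial_Suc_Suc of_nat_add distrib_right sum.distrib) simp
  moreover have "z 0 + (\<Sum>l\<le>K. real (K choose Suc l) * z (Suc l)) = (\<Sum>l\<le>Suc K. real (K choose l) * z l)"
    by (subst sum.atMost_Suc_shift) simp
  moreover have "(\<Sum>l\<le>Suc K. real (K choose l) * z l) = (\<Sum>l\<le>K. real (K choose l) * z l)"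
    by simp
  ultimately show ?thesis by simp
qed

lemma fd_Suc: "fd (Suc K) v j = fd K v (Suc j) - fd K v j"
proof -
  have "fd (Suc K) v j = (\<Sum>l\<le>K. real (K choose l) * ((-1)^(Suc K - l) * v (j+l)))
      + (\<Sum>l\<le>K. real (K choose l) * ((-1)^(Suc K - Suc l) * v (j + Suc l)))"
    unfolding fd_def using pascal_sum[of K "\<lambda>l. (-1)^(Suc K - l) * v (j+l)"]
    by (simp add: algebra_simps)
  also have "\<dots> = - fd K v j + fd K v (Suc j)"
  proof -
    have "(\<Sum>l\<le>K. real (K choose l) * ((-1)^(Suc K - l) * v (j+l))) = - fd K v j"
      unfolding fd_def sum_negf[symmetric]
      by (rule sum.cong) (auto simp: Suc_diff_le)
    moreover have "(\<Sum>l\<le>K. real (K choose l) * ((-1)^(Suc K - Suc l) * v (j + Suc l))) = fd K v (Suc j)"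
      unfolding fd_def by (rule sum.cong) auto
    ultimately show ?thesis by simp
  qed
  finally show ?thesis by simp
qed

lemma fd_const: "fd (Suc K) (\<lambda>_. c) j = 0"
  unfolding fd_Suc by (simp add: fd_def)

lemma fd_shift: "fd K v j = fd K (\<lambda>m. v (j+m)) 0"
  by (simp add: fd_def)

lemma fd_sum: "fd K (\<lambda>m. \<Sum>d\<in>D. g d m) j = (\<Sum>d\<in>D. fd K (g d) j)"
  unfolding fd_def by (simp add: sum_distrib_left sum.swap[of _ D])

lemma fd_scale: "fd K (\<lambda>m. c * g m) j = c * fd K g j"
  unfolding fd_def by (simp add: sum_distrib_left algebra_simps)

lemma fd_diff: "fd K (\<lambda>m. g m - g' m) j = fd K g j - fd K g' j"
  unfolding fd_def by (simp add: sum_subtractf algebra_simps)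

lemma moment_rec:
  "fd (Suc e) (\<lambda>m. (t + real m)^Suc k) 0 =
     t * fd (Suc e) (\<lambda>m. (t + real m)^k) 0 + real (Suc e) * fd e (\<lambda>m. (t + 1 + real m)^k) 0"
proof -
  have s: "(-1)^(Suc e-i) * real (Suc e choose i) * (t + real (0+i))^Suc k =
     t * ((-1)^(Suc e-i) * real (Suc e choose i) * (t + real (0+i))^k) +
     (-1)^(Suc e-i) * real (Suc e choose i) * (real i * (t + real i)^k)" for i
    by (simp only: power_Suc) (simp add: algebra_simps)
  have "fd (Suc e) (\<lambda>m. (t + real m)^Suc k) 0 =
      t * fd (Suc e) (\<lambda>m. (t + real m)^k) 0 +
      (\<Sum>i\<le>Suc e. (-1)^(Suc e-i) * real (Suc e choose i) * (real i * (t + real i)^k))"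
    unfolding fd_def s sum.distrib sum_distrib_left by simp
  also have "(\<Sum>i\<le>Suc e. (-1)^(Suc e-i) * real (Suc e choose i) * (real i * (t + real i)^k))
     = (\<Sum>i\<le>e. (-1)^(Suc e- Suc i) * real (Suc e choose Suc i) * (real (Suc i) * (t + real (Suc i))^k))"
    by (subst sum.atMost_Suc_shift) simp
  also have "\<dots> = real (Suc e) * fd e (\<lambda>m. (t + 1 + real m)^k) 0"
    unfolding fd_def sum_distrib_left
  proof (rule sum.cong)
    fix i assume "i \<in> {..e}"
    have "real (Suc e choose Suc i) * real (Suc i) = real (Suc e) * real (e choose i)"
      using binomial_absorption[of i "Suc e"] by (metis of_nat_mult mult.commute diff_Suc_1)
    note h = this
    define P where "P = (t + 1 + real (0+i))^k"
    have e2: "(t + real (Suc i))^k = P" unfolding P_def by (simp add: add.assoc)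
    have "(-1)^(Suc e- Suc i) * real (Suc e choose Suc i) * (real (Suc i) * P)
       = (-1)^(e-i) * (real (Suc e choose Suc i) * real (Suc i)) * P"
      by (simp only: diff_Suc_Suc mult.assoc)
    also have "\<dots> = (-1)^(e-i) * (real (Suc e) * real (e choose i)) * P"
      by (simp only: h)
    also have "\<dots> = real (Suc e) * ((-1)^(e-i) * real (e choose i) * P)"
      by (simp only: mult_ac)
    finally show "(-1)^(Suc e- Suc i) * real (Suc e choose Suc i) * (real (Suc i) * (t + real (Suc i))^k)
      = real (Suc e) * ((-1)^(e - i) * real (e choose i) * (t + 1 + real (0+i))^k)"
      unfolding e2 P_def .
  qed simp
  finally show ?thesis .
qed

lemma moment_zero: "k < e \<Longrightarrow> fd e (\<lambda>m. (t + real m)^k) 0 = 0"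
proof (induction k arbitrary: e t)
  case 0
  then obtain e' where "e = Suc e'" by (cases e) auto
  then show ?case using fd_const[of e' 1 0] by simp
next
  case (Suc k)
  then obtain e' where e: "e = Suc e'" by (cases e) auto
  show ?case unfolding e moment_rec using Suc e by simp
qed

lemma fd_poly_zero: "k < e \<Longrightarrow> fd e (\<lambda>m. real m ^ k) j = 0"
  using moment_zero[of k e "real j"] by (simp add: fd_shift[of _ _ j] add.commute)

lemma fd_double: "fd K (\<lambda>i. v (2*i)) 0 = (\<Sum>l\<le>K. real (K choose l) * fd K v l)"
proof (induction K arbitrary: v)
  case 0 then show ?case by (simp add: fd_def)
next
  case (Suc K)
  have a: "fd K (\<lambda>i. v (2*i)) 1 = (\<Sum>l\<le>K. real (K choose l) * fd K v (Suc (Suc l)))"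
  proof -
    have "fd K (\<lambda>i. v (2*i)) 1 = fd K (\<lambda>i. v (2*i + 2)) 0" by (simp add: fd_def)
    also have "\<dots> = (\<Sum>l\<le>K. real (K choose l) * fd K (\<lambda>m. v (m+2)) l)"
      using Suc.IH[of "\<lambda>m. v (m+2)"] by simp
    also have "\<dots> = (\<Sum>l\<le>K. real (K choose l) * fd K v (Suc (Suc l)))"
      by (simp add: fd_def add.commute add.left_commute)
    finally show ?thesis .
  qed
  define g where "g = fd K v"
  have "fd (Suc K) (\<lambda>i. v (2*i)) 0 = (\<Sum>l\<le>K. real (K choose l) * (g (Suc (Suc l)) - g l))"
    unfolding fd_Suc One_nat_def[symmetric] a Suc.IH[of v] g_def
    by (simp only: sum_subtractf right_diff_distrib)
  also have "\<dots> = (\<Sum>l\<le>K. real (K choose l) * ((g (Suc l) - g l) + (g (Suc (Suc l)) - g (Suc l))))"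
    by simp
  also have "\<dots> = (\<Sum>l\<le>Suc K. real (Suc K choose l) * (g (Suc l) - g l))"
    unfolding pascal_sum[of K "\<lambda>l. g (Suc l) - g l"]
    by (simp only: distrib_left sum.distrib)
  also have "\<dots> = (\<Sum>l\<le>Suc K. real (Suc K choose l) * fd (Suc K) v l)"
    unfolding fd_Suc g_def ..
  finally show ?case .
qed

definition smallo :: "nat \<Rightarrow> (real \<Rightarrow> real) \<Rightarrow> bool" where
  "smallo m g \<longleftrightarrow> ((\<lambda>h. g h / h^m) \<longlongrightarrow> 0) (at 0)"
definition hasC :: "nat \<Rightarrow> (real \<Rightarrow> real) \<Rightarrow> bool" where
  "hasC m g \<longleftrightarrow> (\<exists>L. ((\<lambda>h. g h / h^m) \<longlongrightarrow> L) (at 0))"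

lemma ev_ne0: "eventually (\<lambda>h::real. h \<noteq> 0) (at 0)" by (simp add: eventually_at_filter)

lemma tendsto_at0_cong:
  assumes "\<And>h::real. h \<noteq> 0 \<Longrightarrow> f h = g h"
  shows "(f \<longlongrightarrow> L) (at 0) \<longleftrightarrow> (g \<longlongrightarrow> L) (at 0)"
  by (rule tendsto_cong) (use ev_ne0 assms in \<open>auto elim: eventually_mono\<close>)

lemma smallo_add: "smallo m f \<Longrightarrow> smallo m g \<Longrightarrow> smallo m (\<lambda>h. f h + g h)"
  unfolding smallo_def by (simp add: add_divide_distrib tendsto_add[where a=0 and b=0, simplified])

lemma smallo_diff: "smallo m f \<Longrightarrow> smallo m g \<Longrightarrow> smallo m (\<lambda>h. f h - g h)"
  unfolding smallo_def by (simp add: diff_divide_distrib tendsto_diff[where a=0 and b=0, simplified])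

lemma smallo_cmult: "smallo m f \<Longrightarrow> smallo m (\<lambda>h. c * f h)"
  unfolding smallo_def using tendsto_mult_right_zero[of "\<lambda>h. f h / h^m" "at 0" c]
  by (simp add: mult.assoc)

lemma smallo_sum: "(\<And>i. i \<in> I \<Longrightarrow> smallo m (f i)) \<Longrightarrow> smallo m (\<lambda>h. \<Sum>i\<in>I. f i h)"
proof (induction I rule: infinite_finite_induct)
  case (infinite A) then show ?case by (simp add: smallo_def)
next
  case empty then show ?case by (simp add: smallo_def)
next
  case (insert x F) then show ?case by (simp add: smallo_add)
qed

lemma hasC_add: "hasC m f \<Longrightarrow> hasC m g \<Longrightarrow> hasC m (\<lambda>h. f h + g h)"
  unfolding hasC_def by (auto simp: add_divide_distrib intro: tendsto_add)

lemma hasC_diff: "hasC m f \<Longrightarrow> hasC m g \<Longrightarrow> hasC m (\<lambda>h. f h - g h)"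
  unfolding hasC_def by (auto simp: diff_divide_distrib intro: tendsto_diff)

lemma hasC_cmult: assumes "hasC m f" shows "hasC m (\<lambda>h. c * f h)"
proof -
  obtain L where "((\<lambda>h. f h / h^m) \<longlongrightarrow> L) (at 0)" using assms hasC_def by blast
  then have "((\<lambda>h. c * (f h / h^m)) \<longlongrightarrow> c*L) (at 0)" by (rule tendsto_mult_left)
  then show ?thesis unfolding hasC_def times_divide_eq_right by blast
qed

lemma hasC_sum: "(\<And>i. i \<in> I \<Longrightarrow> hasC m (f i)) \<Longrightarrow> hasC m (\<lambda>h. \<Sum>i\<in>I. f i h)"
proof (induction I rule: infinite_finite_induct)
  case (infinite A) then show ?case by (auto simp: hasC_def)
next
  case empty then show ?case by (auto simp: hasC_def)
next
  case (insert x F) then show ?case by (simp add: hasC_add)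
qed

lemma smallo_mono:
  assumes "smallo n g" "k \<le> n" shows "smallo k g"
proof -
  have "((\<lambda>h. (g h / h^n) * h^(n-k)) \<longlongrightarrow> 0 * 0^(n-k)) (at 0)"
    using assms(1) unfolding smallo_def
    by (intro tendsto_intros) auto
  then have "((\<lambda>h. (g h / h^n) * h^(n-k)) \<longlongrightarrow> 0) (at 0)" by simp
  moreover have "g h / h^k = (g h / h^n) * h^(n-k)" if "h \<noteq> 0" for h :: real
  proof -
    have "h^n = h^k * h^(n-k)" using assms(2) by (simp add: power_add[symmetric])
    then show ?thesis using that by (simp add: field_simps)
  qed
  ultimately show ?thesis unfolding smallo_def using tendsto_at0_cong by (metis (no_types, lifting))
qed

lemma smallo_scale:
  assumes "smallo m g" "g 0 = 0" shows "smallo m (\<lambda>h. g (c*h))"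
proof (cases "c = 0")
  case True then show ?thesis using assms by (simp add: smallo_def)
next
  case False
  have lim: "filterlim (\<lambda>h::real. c*h) (at 0) (at 0)"
  proof (rule filterlim_atI)
    show "((\<lambda>h::real. c*h) \<longlongrightarrow> 0) (at 0)"
      by (rule tendsto_eq_intros) (auto intro: tendsto_ident_at)
    show "eventually (\<lambda>h::real. c*h \<noteq> 0) (at 0)"
      using ev_ne0 False by (auto elim: eventually_mono)
  qed
  have "((\<lambda>h. g (c*h) / (c*h)^m) \<longlongrightarrow> 0) (at 0)"
    using filterlim_compose[OF assms(1)[unfolded smallo_def] lim] by (simp add: o_def)
  then have "((\<lambda>h. c^m * (g (c*h) / (c*h)^m)) \<longlongrightarrow> c^m * 0) (at 0)"
    by (intro tendsto_mult_left)
  moreover have "c^m * (g (c*h) / (c*h)^m) = g (c*h) / h^m" if "h \<noteq> 0" for h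
    using that False by (simp add: power_mult_distrib)
  ultimately show ?thesis unfolding smallo_def using tendsto_at0_cong
    by (metis (no_types, lifting) mult_zero_right)
qed

lemma small_bound:
  assumes "smallo m g" "r > 0"
  obtains s where "s > 0" "\<And>t. t \<noteq> 0 \<Longrightarrow> \<bar>t\<bar> < s \<Longrightarrow> \<bar>g t\<bar> \<le> r * \<bar>t\<bar>^m"
proof -
  from assms obtain s where s: "s > 0" "\<And>t. t \<noteq> 0 \<and> norm (t - 0) < s \<Longrightarrow> norm (g t / t^m - 0) < r"
    unfolding smallo_def LIM_eq by blast
  show ?thesis
  proof (rule that[OF s(1)])
    fix t :: real assume t: "t \<noteq> 0" "\<bar>t\<bar> < s"
    then have "\<bar>g t\<bar> / \<bar>t\<bar>^m < r" using s(2)[of t] by (simp add: abs_divide power_abs)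
    then show "\<bar>g t\<bar> \<le> r * \<bar>t\<bar>^m" using t by (simp add: divide_less_eq)
  qed
qed

lemma two_term_core:
  fixes g :: "real \<Rightarrow> real" and b :: real
  assumes N: "N \<ge> 1" and s1: "smallo (N-1) g" and s2: "smallo N (\<lambda>h. g (2*h) - b * g h)"
    and bb: "\<bar>b\<bar> \<le> 2^(N-1)"
  shows "smallo N g"
  unfolding smallo_def LIM_eq
proof (intro allI impI)
  fix \<epsilon> :: real assume \<epsilon>: "\<epsilon> > 0"
  obtain \<delta> where \<delta>: "\<delta> > 0" and E: "\<And>t. t \<noteq> 0 \<Longrightarrow> \<bar>t\<bar> < \<delta> \<Longrightarrow> \<bar>g (2*t) - b * g t\<bar> \<le> \<epsilon>/2 * \<bar>t\<bar>^N"
    using small_bound[OF s2, of "\<epsilon>/2"] \<epsilon> by auto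
  have main: "\<bar>g h\<bar> \<le> \<epsilon>/2 * \<bar>h\<bar>^N" if h: "h \<noteq> 0" "\<bar>h\<bar> < \<delta>" for h
  proof -
    have bm: "\<bar>b\<bar>^m \<le> 2^((N-1)*m)" for m
      using power_mono[OF bb, of m] by (simp add: power_mult)
    have inv: "\<bar>g h - b^m * g (h/2^m)\<bar> \<le> \<epsilon>/2 * \<bar>h\<bar>^N * (1 - (1/2)^m)" for m
    proof (induction m)
      case 0 then show ?case by simp
    next
      case (Suc m)
      define t where "t = h / 2^Suc m"
      have t0: "t \<noteq> 0" using h by (simp add: t_def)
      have "\<bar>t\<bar> = \<bar>h\<bar> / 2^Suc m" by (simp add: t_def abs_divide)
      also have "\<dots> \<le> \<bar>h\<bar>"
        using mult_left_mono[of 1 "2^Suc m" "\<bar>h\<bar>"] one_le_power[of "2::real" "Suc m"]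
        by (simp add: divide_le_eq)
      finally have tl: "\<bar>t\<bar> < \<delta>" using h by linarith
      have h2: "h / 2^m = 2 * t" by (simp add: t_def)
      have "\<bar>b^m * (g (2*t) - b * g t)\<bar> \<le> 2^((N-1)*m) * (\<epsilon>/2 * \<bar>t\<bar>^N)"
        unfolding abs_mult power_abs
        by (rule mult_mono[OF bm E[OF t0 tl]]) auto
      also have "\<bar>t\<bar>^N = \<bar>h\<bar>^N / 2^(Suc m * N)"
        by (simp add: t_def abs_divide power_divide power_mult power_add power_mult_distrib)
      also have "2^((N-1)*m) * (\<epsilon>/2 * (\<bar>h\<bar>^N / 2^(Suc m * N))) \<le> \<epsilon>/2 * \<bar>h\<bar>^N * (1/2)^(Suc m)"
      proof -
        have "(2::real)^((N-1)*m) * 2^(Suc m) \<le> 2^(Suc m * N)"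
        proof -
          have "(N-1)*m + Suc m \<le> Suc m * N" using N by (cases N) auto
          then have "(2::real)^((N-1)*m + Suc m) \<le> 2^(Suc m * N)" by (intro power_increasing) auto
          then show ?thesis by (simp add: power_add)
        qed
        then have "(2::real)^((N-1)*m) / 2^(Suc m * N) \<le> (1/2)^(Suc m)"
          by (simp add: field_simps power_divide)
        then have "\<epsilon>/2 * \<bar>h\<bar>^N * ((2::real)^((N-1)*m) / 2^(Suc m * N)) \<le> \<epsilon>/2 * \<bar>h\<bar>^N * (1/2)^(Suc m)"
          using \<epsilon> by (intro mult_left_mono) auto
        then show ?thesis by (simp add: field_simps)
      qed
      finally have X: "\<bar>b^m * (g (2*t) - b * g t)\<bar> \<le> \<epsilon>/2 * \<bar>h\<bar>^N * (1/2)^(Suc m)" .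
      have "g h - b^Suc m * g (h/2^Suc m) = (g h - b^m * g (h/2^m)) + b^m * (g (2*t) - b * g t)"
        unfolding h2 by (simp add: t_def algebra_simps)
      then have "\<bar>g h - b^Suc m * g (h/2^Suc m)\<bar> \<le> \<epsilon>/2 * \<bar>h\<bar>^N * (1 - (1/2)^m) + \<epsilon>/2 * \<bar>h\<bar>^N * (1/2)^(Suc m)"
        using Suc.IH X by linarith
      also have "\<dots> = \<epsilon>/2 * \<bar>h\<bar>^N * (1 - (1/2)^Suc m)" by (simp add: field_simps)
      finally show ?case .
    qed
    show ?thesis
    proof (rule field_le_epsilon)
      fix \<eta> :: real assume \<eta>: "\<eta> > 0"
      have hp: "\<bar>h\<bar>^(N-1) > 0" using h by simp
      obtain \<delta>' where \<delta>': "\<delta>' > 0" and E': "\<And>t. t \<noteq> 0 \<Longrightarrow> \<bar>t\<bar> < \<delta>' \<Longrightarrow> \<bar>g t\<bar> \<le> \<eta> / 2 / \<bar>h\<bar>^(N-1) * \<bar>t\<bar>^(N-1)"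
        using small_bound[OF s1, of "\<eta> / 2 / \<bar>h\<bar>^(N-1)"] \<eta> hp by auto
      obtain m where m: "\<bar>h\<bar>/\<delta>' < 2^m" using real_arch_pow[of 2 "\<bar>h\<bar>/\<delta>'"] by auto
      define t where "t = h / 2^m"
      have t0: "t \<noteq> 0" using h by (simp add: t_def)
      have tl: "\<bar>t\<bar> < \<delta>'" using m \<delta>' by (simp add: t_def abs_divide field_simps)
      have "\<bar>b^m * g t\<bar> \<le> 2^((N-1)*m) * (\<eta> / 2 / \<bar>h\<bar>^(N-1) * \<bar>t\<bar>^(N-1))"
        unfolding abs_mult power_abs by (rule mult_mono[OF bm E'[OF t0 tl]]) auto
      also have "\<bar>t\<bar>^(N-1) = \<bar>h\<bar>^(N-1) / 2^((N-1)*m)"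
        by (simp add: t_def abs_divide power_divide power_mult[symmetric] mult.commute)
      also have "2^((N-1)*m) * (\<eta> / 2 / \<bar>h\<bar>^(N-1) * (\<bar>h\<bar>^(N-1) / 2^((N-1)*m))) = \<eta>/2"
        using hp h by (simp add: field_simps)
      finally have "\<bar>b^m * g t\<bar> \<le> \<eta>/2" .
      moreover have "\<bar>g h - b^m * g t\<bar> \<le> \<epsilon>/2 * \<bar>h\<bar>^N"
      proof -
        have "\<epsilon>/2 * \<bar>h\<bar>^N * (1 - (1/2)^m) \<le> \<epsilon>/2 * \<bar>h\<bar>^N"
          by (rule mult_left_le) (use \<epsilon> in auto)
        then show ?thesis using inv[of m] unfolding t_def by linarith
      qed
      ultimately show "\<bar>g h\<bar> \<le> \<epsilon>/2 * \<bar>h\<bar>^N + \<eta>" using \<eta> by linarith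
    qed
  qed
  show "\<exists>s>0. \<forall>h. h \<noteq> 0 \<and> norm (h - 0) < s \<longrightarrow> norm (g h / h^N - 0) < \<epsilon>"
  proof (intro exI[of _ \<delta>] conjI allI impI)
    fix h :: real assume "h \<noteq> 0 \<and> norm (h - 0) < \<delta>"
    then have h: "h \<noteq> 0" "\<bar>h\<bar> < \<delta>" by auto
    have "\<bar>g h\<bar> / \<bar>h\<bar>^N \<le> \<epsilon>/2" using main[OF h] h by (simp add: divide_le_eq)
    then have X: "\<bar>g h / h^N\<bar> \<le> \<epsilon>/2" by (simp only: abs_divide power_abs)
    show "norm (g h / h^N - 0) < \<epsilon>" using X \<epsilon> by (simp only: real_norm_def diff_zero)
  qed (use \<delta> in auto)
qed

lemma two_term:
  fixes g :: "real \<Rightarrow> real" and b :: real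
  assumes N: "N \<ge> 1" and s1: "smallo (N-1) g" and s2: "hasC N (\<lambda>h. g (2*h) - b * g h)"
    and bb: "\<bar>b\<bar> \<le> 2^(N-1)"
  shows "hasC N g"
proof -
  obtain L where L: "((\<lambda>h. (g (2*h) - b * g h) / h^N) \<longlongrightarrow> L) (at 0)"
    using s2 unfolding hasC_def by blast
  have "(2::real)^(N-1) < 2^N" using N by (intro power_strict_increasing) auto
  then have pos: "2^N - b > 0" using bb by linarith
  define c where "c = L / (2^N - b)"
  define g' where "g' h = g h - c * h^N" for h
  have "smallo (N-1) (\<lambda>h. c * h^N)"
    unfolding smallo_def
  proof -
    have "((\<lambda>h::real. c * h) \<longlongrightarrow> c * 0) (at 0)" by (intro tendsto_intros)
    moreover have "c * h = c * h^N / h^(N-1)" if "h \<noteq> 0" for h :: real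
    proof -
      have "h^N = h * h^(N-1)" using N by (simp add: power_eq_if)
      then show ?thesis using that by simp
    qed
    ultimately show "((\<lambda>h. c * h^N / h^(N-1)) \<longlongrightarrow> 0) (at 0)"
      using tendsto_at0_cong by (metis (no_types, lifting) mult_zero_right)
  qed
  then have s1': "smallo (N-1) g'" unfolding g'_def using s1 smallo_diff by blast
  have "((\<lambda>h. (g (2*h) - b * g h) / h^N - L) \<longlongrightarrow> L - L) (at 0)"
    using L by (intro tendsto_intros)
  moreover have "(g (2*h) - b * g h) / h^N - L = (g' (2*h) - b * g' h) / h^N" if "h \<noteq> 0" for h :: real
  proof -
    have cL: "c * (2^N - b) = L" unfolding c_def using pos by simp
    have "(g' (2*h) - b * g' h) = (g (2*h) - b * g h) - L * h^N"
      unfolding g'_def cL[symmetric] by (simp add: power_mult_distrib algebra_simps)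
    then show ?thesis using that by (simp add: diff_divide_distrib)
  qed
  ultimately have s2': "smallo N (\<lambda>h. g' (2*h) - b * g' h)"
    unfolding smallo_def using tendsto_at0_cong by (metis (no_types, lifting) diff_self)
  have "smallo N g'" by (rule two_term_core[OF N s1' s2' bb])
  then have "((\<lambda>h. g' h / h^N + c) \<longlongrightarrow> 0 + c) (at 0)"
    unfolding smallo_def by (intro tendsto_intros)
  moreover have "g' h / h^N + c = g h / h^N" if "h \<noteq> 0" for h :: real
    using that unfolding g'_def by (simp add: diff_divide_distrib)
  ultimately show ?thesis unfolding hasC_def using tendsto_at0_cong
    by (metis (no_types, lifting) add_0)
qed

lemma sum_rev_atMost: "(\<Sum>i\<le>(k::nat). g i) = (\<Sum>i\<le>k. g (k - i))"
  by (rule sum.reindex_bij_witness[where i="\<lambda>i. k-i" and j="\<lambda>i. k-i"]) auto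

lemma dq_fd: "diff_quot k j f x h = fd k (\<lambda>m. f (x + real m * h)) j / h^k"
proof -
  have "(\<Sum>i\<le>k. (-1) ^ i * real (k choose i) * f (x + (real k + real j - real i) * h))
     = (\<Sum>i\<le>k. (-1) ^ (k-i) * real (k choose (k-i)) * f (x + (real k + real j - real (k-i)) * h))"
    by (rule sum_rev_atMost)
  also have "\<dots> = fd k (\<lambda>m. f (x + real m * h)) j"
    unfolding fd_def
  proof (rule sum.cong)
    fix i assume "i \<in> {..k}"
    then have i: "i \<le> k" by simp
    have "real k + real j - real (k-i) = real (j + i)" using i by (simp add: of_nat_diff)
    then show "(-1) ^ (k-i) * real (k choose (k-i)) * f (x + (real k + real j - real (k-i)) * h)
        = (-1) ^ (k-i) * real (k choose i) * f (x + real (j+i) * h)"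
      using i by (simp add: binomial_symmetric[OF i, symmetric])
  qed simp
  finally show ?thesis unfolding diff_quot_def by simp
qed

lemma fd_taylor_zero:
  assumes "n < K"
  shows "fd K (\<lambda>m. \<Sum>i\<le>n. a i * (real m * h)^i / fact i) j = 0"
proof -
  have "fd K (\<lambda>m. \<Sum>i\<le>n. a i * (real m * h)^i / fact i) j
      = fd K (\<lambda>m. \<Sum>i\<le>n. (a i * h^i / fact i) * real m ^ i) j"
    by (simp add: power_mult_distrib algebra_simps)
  also have "\<dots> = (\<Sum>i\<le>n. (a i * h^i / fact i) * fd K (\<lambda>m. real m ^ i) j)"
    by (simp only: fd_sum fd_scale)
  also have "\<dots> = 0" using assms by (simp add: fd_poly_zero)
  finally show ?thesis .
qed

lemma sum0: "(\<Sum>i\<le>n. a i * (0::real)^i / fact i) = a 0"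
  by (induction n) auto

lemma smallo_zero_hasC: "hasC N (\<lambda>h. 0)" by (auto simp: hasC_def)

lemma peano_step:
  assumes N: "N \<ge> 2" and P: "peano_differentiable (N-1) f x"
    and D: "\<forall>j\<le>N-2. D_exists N j f x"
  shows "peano_differentiable N f x"
proof -
  obtain a where a0: "a 0 = f x" and
    lim: "((\<lambda>h. (f (x+h) - (\<Sum>i\<le>N-1. a i * h^i / fact i)) / h^(N-1)) \<longlongrightarrow> 0) (at 0)"
    using P unfolding peano_differentiable_def by blast
  define r where "r h = f (x+h) - (\<Sum>i\<le>N-1. a i * h^i / fact i)" for h
  have r0: "r 0 = 0" unfolding r_def using sum0[of a "N-1"] a0 by simp
  have sr: "smallo (N-1) r" using lim unfolding smallo_def r_def .
  define G where "G K j h = fd K (\<lambda>m. r (real m * h)) j" for K j h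
  have sG: "smallo (N-1) (G K j)" for K j
  proof -
    have "smallo (N-1) (\<lambda>h. \<Sum>i\<le>K. (-1)^(K-i) * real (K choose i) * r (real (j+i) * h))"
      by (intro smallo_sum smallo_cmult smallo_scale[OF sr r0])
    then show ?thesis unfolding G_def fd_def by (simp add: mult.commute)
  qed
  have F1: "hasC N (G N j)" if j: "j \<le> N-2" for j
  proof -
    obtain L where L: "(diff_quot N j f x \<longlongrightarrow> L) (at 0)"
      using D j unfolding D_exists_def by blast
    have "G N j h / h^N = diff_quot N j f x h" for h
    proof -
      have "fd N (\<lambda>m. f (x + real m * h)) j
          = fd N (\<lambda>m. r (real m * h) + (\<Sum>i\<le>N-1. a i * (real m * h)^i / fact i)) j"
        unfolding r_def by simp
      also have "\<dots> = G N j h + fd N (\<lambda>m. \<Sum>i\<le>N-1. a i * (real m * h)^i / fact i) j"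
        unfolding G_def fd_def by (simp add: sum.distrib algebra_simps)
      also have "fd N (\<lambda>m. \<Sum>i\<le>N-1. a i * (real m * h)^i / fact i) j = 0"
        by (rule fd_taylor_zero) (use N in auto)
      finally show ?thesis unfolding dq_fd by simp
    qed
    then show ?thesis using L unfolding hasC_def by auto
  qed
  have F2: "G (Suc K) j h = G K (Suc j) h - G K j h" for K j h
    unfolding G_def fd_Suc ..
  have F3: "G K 0 (2*h) = (\<Sum>l\<le>K. real (K choose l) * G K l h)" for K h
  proof -
    have "G K 0 (2*h) = fd K (\<lambda>i. (\<lambda>m. r (real m * h)) (2*i)) 0"
      unfolding G_def by (simp add: mult.assoc mult.left_commute)
    also have "\<dots> = (\<Sum>l\<le>K. real (K choose l) * G K l h)"
      unfolding G_def using fd_double[of K "\<lambda>m. r (real m * h)"] by simp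
    finally show ?thesis .
  qed
  have desc: "\<forall>j. j \<le> 2*N-2-(N-d) \<longrightarrow> hasC N (G (N-d) j)" if "d < N" for d
    using that
  proof (induction d)
    case 0 then show ?case using F1 by simp
  next
    case (Suc d)
    define K where "K = N - d"
    define K' where "K' = N - Suc d"
    have K: "K = Suc K'" "K' \<ge> 1" "K \<le> N" using Suc.prems unfolding K_def K'_def by auto
    have IH: "\<forall>j. j \<le> 2*N-2-K \<longrightarrow> hasC N (G K j)" using Suc by (simp add: K_def)
    define w where "w = G K'"
    have step: "hasC N (\<lambda>h. w (Suc j) h - w j h)" if "j \<le> 2*N-2-K" for j
      using IH that unfolding w_def K(1) F2 by simp
    have dif: "hasC N (\<lambda>h. w j h - w 0 h)" if "j \<le> 2*N-1-K" for j
      using that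
    proof (induction j)
      case 0 then show ?case by (simp add: smallo_zero_hasC)
    next
      case (Suc j)
      then have "hasC N (\<lambda>h. (w (Suc j) h - w j h) + (w j h - w 0 h))"
        by (intro hasC_add step) auto
      then show ?case by simp
    qed
    have "hasC N (\<lambda>h. w 0 (2*h) - 2^K' * w 0 h)"
    proof -
      have "w 0 (2*h) - 2^K' * w 0 h = (\<Sum>l\<le>K'. real (K' choose l) * (w l h - w 0 h))" for h
      proof -
        have "(2::real)^K' = (\<Sum>l\<le>K'. real (K' choose l))"
          using choose_row_sum[of K'] by (metis of_nat_numeral of_nat_power of_nat_sum)
        then show ?thesis unfolding w_def F3
          by (simp add: sum_distrib_right sum_subtractf right_diff_distrib)
      qed
      moreover have "hasC N (\<lambda>h. \<Sum>l\<le>K'. real (K' choose l) * (w l h - w 0 h))"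
        using K by (intro hasC_sum hasC_cmult dif) auto
      ultimately show ?thesis by simp
    qed
    moreover have "\<bar>(2::real)^K'\<bar> \<le> 2^(N-1)" using K by (simp add: power_increasing)
    ultimately have w0: "hasC N (w 0)"
      using two_term[of N "w 0" "2^K'"] sG K unfolding w_def by auto
    show ?case
    proof (intro allI impI)
      fix j assume "j \<le> 2*N-2-(N - Suc d)"
      then have "j \<le> 2*N-1-K" using K unfolding K'_def by simp
      then have "hasC N (\<lambda>h. (w j h - w 0 h) + w 0 h)" using dif w0 by (intro hasC_add) auto
      then show "hasC N (G (N - Suc d) j)" unfolding w_def K'_def by simp
    qed
  qed
  have "hasC N (G 1 0)" using desc[of "N-1"] N by simp
  moreover have "G 1 0 h = r h" for h unfolding G_def fd_def using r0 by simp
  ultimately obtain M where M: "((\<lambda>h. r h / h^N) \<longlongrightarrow> M) (at 0)"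
    unfolding hasC_def by auto
  define a' where "a' = a(N := M * fact N)"
  show ?thesis unfolding peano_differentiable_def
  proof (intro exI[of _ a'] conjI)
    show "a' 0 = f x" using a0 N by (simp add: a'_def)
    have "((\<lambda>h. r h / h^N - M) \<longlongrightarrow> M - M) (at 0)" using M by (intro tendsto_intros)
    moreover have "r h / h^N - M = (f (x + h) - (\<Sum>i\<le>N. a' i * h ^ i / fact i)) / h ^ N"
      if "h \<noteq> 0" for h
    proof -
      obtain N' where N': "N = Suc N'" using N by (cases N) auto
      have "(\<Sum>i\<le>N. a' i * h ^ i / fact i) = (\<Sum>i\<le>N'. a' i * h ^ i / fact i) + a' N * h^N / fact N"
        unfolding N' by simp
      also have "(\<Sum>i\<le>N'. a' i * h ^ i / fact i) = (\<Sum>i\<le>N-1. a i * h ^ i / fact i)"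
        unfolding N' by (rule sum.cong) (auto simp: a'_def N')
      also have "a' N * h^N / fact N = M * h^N" by (simp add: a'_def)
      finally have "(\<Sum>i\<le>N. a' i * h ^ i / fact i) = (\<Sum>i\<le>N-1. a i * h ^ i / fact i) + M * h^N" .
      then show ?thesis using that unfolding r_def by (simp add: field_simps)
    qed
    ultimately show "((\<lambda>h. (f (x + h) - (\<Sum>i\<le>N. a' i * h ^ i / fact i)) / h ^ N) \<longlongrightarrow> 0) (at 0)"
      using tendsto_at0_cong by (metis (no_types, lifting) diff_self)
  qed
qed

lemma smallo_hasC: "smallo m g \<Longrightarrow> hasC m g"
  unfolding smallo_def hasC_def by blast

lemma pow_div_eq: "h \<noteq> 0 \<Longrightarrow> k \<le> i \<Longrightarrow> (h::real)^i / h^k = h^(i-k)"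
  by (simp add: power_diff)

lemma hasC_pow: assumes "k \<le> i" shows "hasC k (\<lambda>h::real. c * h^i)"
proof -
  have "((\<lambda>h::real. c * h^(i-k)) \<longlongrightarrow> c * 0^(i-k)) (at 0)" by (intro tendsto_intros)
  moreover have "c * h^(i-k) = c * h^i / h^k" if "h \<noteq> 0" for h :: real
    using pow_div_eq[OF that assms] by (metis times_divide_eq_right)
  ultimately show ?thesis unfolding hasC_def using tendsto_at0_cong by (metis (no_types, lifting))
qed

lemma smallo_pow: assumes "k < i" shows "smallo k (\<lambda>h::real. c * h^i)"
proof -
  have "((\<lambda>h::real. c * h^(i-k)) \<longlongrightarrow> c * 0^(i-k)) (at 0)" by (intro tendsto_intros)
  moreover have "(0::real)^(i-k) = 0" using assms by simp
  ultimately have "((\<lambda>h::real. c * h^(i-k)) \<longlongrightarrow> 0) (at 0)" by simp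
  moreover have "c * h^(i-k) = c * h^i / h^k" if "h \<noteq> 0" for h :: real
    using pow_div_eq[OF that, of k i] assms by (metis less_imp_le times_divide_eq_right)
  ultimately show ?thesis unfolding smallo_def using tendsto_at0_cong by (metis (no_types, lifting))
qed

lemma peano_mono:
  assumes P: "peano_differentiable n f x" and mn: "m \<le> n"
  shows "peano_differentiable m f x"
proof -
  obtain a where a0: "a 0 = f x" and
    lim: "((\<lambda>h. (f (x+h) - (\<Sum>i\<le>n. a i * h^i / fact i)) / h^n) \<longlongrightarrow> 0) (at 0)"
    using P unfolding peano_differentiable_def by blast
  define R where "R h = f (x+h) - (\<Sum>i\<le>n. a i * h^i / fact i)" for h
  have sR: "smallo m R" using smallo_mono[of n R m] lim mn unfolding smallo_def R_def by blast
  have sp: "smallo m (\<lambda>h. \<Sum>i\<in>{m<..n}. (a i / fact i) * h^i)"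
    by (intro smallo_sum smallo_pow) auto
  have "smallo m (\<lambda>h. R h + (\<Sum>i\<in>{m<..n}. (a i / fact i) * h^i))"
    using sR sp by (rule smallo_add)
  moreover have "R h + (\<Sum>i\<in>{m<..n}. (a i / fact i) * h^i) = f (x+h) - (\<Sum>i\<le>m. a i * h^i / fact i)" for h
  proof -
    have U: "{..n} = {..m} \<union> {m<..n}" using mn by auto
    have "(\<Sum>i\<le>n. a i * h^i / fact i) = (\<Sum>i\<le>m. a i * h^i / fact i) + (\<Sum>i\<in>{m<..n}. a i * h^i / fact i)"
      unfolding U by (rule sum.union_disjoint) auto
    then show ?thesis unfolding R_def by simp
  qed
  ultimately show ?thesis unfolding peano_differentiable_def smallo_def using a0 by auto
qed

lemma peano1_deriv: assumes "peano_differentiable 1 f x" shows "\<exists>D. (f has_real_derivative D) (at x)"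
proof -
  obtain a where a0: "a 0 = f x" and
    lim: "((\<lambda>h. (f (x+h) - (\<Sum>i\<le>1. a i * h^i / fact i)) / h^1) \<longlongrightarrow> 0) (at 0)"
    using assms unfolding peano_differentiable_def by blast
  have "((\<lambda>h. (f (x+h) - (\<Sum>i\<le>1. a i * h^i / fact i)) / h^1 + a 1) \<longlongrightarrow> 0 + a 1) (at 0)"
    using lim by (intro tendsto_intros)
  moreover have "(f (x+h) - (\<Sum>i\<le>1. a i * h^i / fact i)) / h^1 + a 1 = (f (x + h) - f x) / h"
    if "h \<noteq> 0" for h
    using that a0 by (simp add: field_simps)
  ultimately have "((\<lambda>h. (f (x + h) - f x) / h) \<longlongrightarrow> a 1) (at 0)"
    using tendsto_at0_cong by (metis (no_types, lifting) add_0)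
  then show ?thesis unfolding DERIV_def by blast
qed

lemma deriv_peano1: assumes "(f has_real_derivative D) (at x)" shows "peano_differentiable 1 f x"
proof -
  define a where "a i = (if i = 0 then f x else D)" for i :: nat
  have "((\<lambda>h. (f (x + h) - f x) / h - D) \<longlongrightarrow> D - D) (at 0)"
    using assms unfolding DERIV_def by (intro tendsto_intros)
  moreover have "(f (x + h) - f x) / h - D = (f (x+h) - (\<Sum>i\<le>1. a i * h^i / fact i)) / h^1"
    if "h \<noteq> 0" for h
    using that by (simp add: a_def field_simps)
  ultimately have "((\<lambda>h. (f (x+h) - (\<Sum>i\<le>1. a i * h^i / fact i)) / h^1) \<longlongrightarrow> 0) (at 0)"
    using tendsto_at0_cong by (metis (no_types, lifting) diff_self)
  then show ?thesis unfolding peano_differentiable_def by (intro exI[of _ a]) (simp add: a_def)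
qed

lemma fd_taylor:
  "fd K (\<lambda>m. \<Sum>i\<le>n. a i * (real m * h)^i / fact i) j
     = (\<Sum>i\<le>n. (a i * h^i / fact i) * fd K (\<lambda>m. real m ^ i) j)"
proof -
  have "fd K (\<lambda>m. \<Sum>i\<le>n. a i * (real m * h)^i / fact i) j
      = fd K (\<lambda>m. \<Sum>i\<le>n. (a i * h^i / fact i) * real m ^ i) j"
    by (simp add: power_mult_distrib algebra_simps)
  also have "\<dots> = (\<Sum>i\<le>n. (a i * h^i / fact i) * fd K (\<lambda>m. real m ^ i) j)"
    by (simp only: fd_sum fd_scale)
  finally show ?thesis .
qed

lemma peano_D:
  assumes P: "peano_differentiable n f x" and k: "k \<le> n"
  shows "D_exists k j f x"
proof -
  obtain a where a0: "a 0 = f x" and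
    lim: "((\<lambda>h. (f (x+h) - (\<Sum>i\<le>n. a i * h^i / fact i)) / h^n) \<longlongrightarrow> 0) (at 0)"
    using P unfolding peano_differentiable_def by blast
  define R where "R h = f (x+h) - (\<Sum>i\<le>n. a i * h^i / fact i)" for h
  have R0: "R 0 = 0" unfolding R_def using sum0[of a n] a0 by simp
  have sR: "smallo k R" using smallo_mono[of n R k] lim k unfolding smallo_def R_def by blast
  have s1: "smallo k (\<lambda>h. fd k (\<lambda>m. R (real m * h)) j)"
  proof -
    have "smallo k (\<lambda>h. \<Sum>i\<le>k. (-1)^(k-i) * real (k choose i) * R (real (j+i) * h))"
      by (intro smallo_sum smallo_cmult smallo_scale[OF sR R0])
    then show ?thesis unfolding fd_def by (simp add: mult.commute)
  qed
  define c where "c i = a i / fact i * fd k (\<lambda>m. real m ^ i) j" for i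
  have s2: "hasC k (\<lambda>h. \<Sum>i\<le>n. c i * h^i)"
  proof (intro hasC_sum)
    fix i assume "i \<in> {..n}"
    show "hasC k (\<lambda>h. c i * h^i)"
    proof (cases "i < k")
      case True
      then have "c i = 0" unfolding c_def by (simp add: fd_poly_zero)
      then show ?thesis by (simp add: smallo_zero_hasC)
    next
      case False then show ?thesis by (intro hasC_pow) auto
    qed
  qed
  have "hasC k (\<lambda>h. fd k (\<lambda>m. R (real m * h)) j + (\<Sum>i\<le>n. c i * h^i))"
    using smallo_hasC[OF s1] s2 by (rule hasC_add)
  moreover have "fd k (\<lambda>m. R (real m * h)) j + (\<Sum>i\<le>n. c i * h^i) = fd k (\<lambda>m. f (x + real m * h)) j" for h
  proof -
    have "fd k (\<lambda>m. f (x + real m * h)) j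
        = fd k (\<lambda>m. R (real m * h) + (\<Sum>i\<le>n. a i * (real m * h)^i / fact i)) j"
      unfolding R_def by simp
    also have "\<dots> = fd k (\<lambda>m. R (real m * h)) j + fd k (\<lambda>m. \<Sum>i\<le>n. a i * (real m * h)^i / fact i) j"
      unfolding fd_def by (simp add: sum.distrib algebra_simps)
    also have "fd k (\<lambda>m. \<Sum>i\<le>n. a i * (real m * h)^i / fact i) j = (\<Sum>i\<le>n. c i * h^i)"
      unfolding fd_taylor c_def by (rule sum.cong[OF refl]) (simp add: mult_ac divide_inverse)
    finally show ?thesis by simp
  qed
  then have "(\<lambda>h. fd k (\<lambda>m. R (real m * h)) j + (\<Sum>i\<le>n. c i * h^i)) = (\<lambda>h. fd k (\<lambda>m. f (x + real m * h)) j)"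
    by (rule ext)
  ultimately have "hasC k (\<lambda>h. fd k (\<lambda>m. f (x + real m * h)) j)" by simp
  moreover have "diff_quot k j f x = (\<lambda>h. fd k (\<lambda>m. f (x + real m * h)) j / h^k)"
    by (rule ext) (rule dq_fd)
  ultimately show ?thesis unfolding hasC_def D_exists_def by simp
qed

theorem corollary2:
  fixes n :: nat and f :: "real \<Rightarrow> real" and x :: real
  assumes "n \<ge> 2"
    and "f \<in> borel_measurable lebesgue"
  shows "((\<exists>D. (f has_real_derivative D) (at x)) \<and>
           (\<forall>k\<in>{2..n}. \<forall>j\<in>{0..k-2}. D_exists k j f x))
         \<longleftrightarrow> peano_differentiable n f x"
proof
  assume A: "(\<exists>D. (f has_real_derivative D) (at x)) \<and>
           (\<forall>k\<in>{2..n}. \<forall>j\<in>{0..k-2}. D_exists k j f x)"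
  have "1 \<le> N \<longrightarrow> N \<le> n \<longrightarrow> peano_differentiable N f x" for N
  proof (induction N)
    case 0 then show ?case by simp
  next
    case (Suc N)
    show ?case
    proof (cases "N = 0")
      case True
      obtain D where "(f has_real_derivative D) (at x)" using A by blast
      then show ?thesis using deriv_peano1 True by simp
    next
      case False
      show ?thesis
      proof (intro impI)
        assume SN: "Suc N \<le> n"
        have pN: "peano_differentiable N f x" using Suc.IH False SN by simp
        have DN: "\<forall>j\<le>Suc N-2. D_exists (Suc N) j f x"
        proof (intro allI impI)
          fix j assume "j \<le> Suc N - 2"
          moreover have "Suc N \<in> {2..n}" using False SN by simp
          ultimately show "D_exists (Suc N) j f x" using A by simp
        qed
        show "peano_differentiable (Suc N) f x"
          using peano_step[of "Suc N" f x] False pN DN by simp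
      qed
    qed
  qed
  then show "peano_differentiable n f x" using assms(1) by auto
next
  assume P: "peano_differentiable n f x"
  show "(\<exists>D. (f has_real_derivative D) (at x)) \<and> (\<forall>k\<in>{2..n}. \<forall>j\<in>{0..k-2}. D_exists k j f x)"
  proof
    show "\<exists>D. (f has_real_derivative D) (at x)"
      using peano1_deriv[OF peano_mono[OF P]] assms(1) by simp
    show "\<forall>k\<in>{2..n}. \<forall>j\<in>{0..k-2}. D_exists k j f x"
      using peano_D[OF P] by simp
  qed
qed

end
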